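(* Consider the system, for environments $i=1,\dots,N$ and time steps $t=1,\dots,T$, $$x_{t+1}^{(i)} = f_0(x_t^{(i)}) + B(x_t^{(i)})u_t^{(i)} - f(x_t^{(i)},c^{(i)}) + w_t^{(i)},\qquad x_1^{(i)}=0,$$ under the standing assumptions described in the context (full actuation, $\|w_t^{(i)}\|\le W$, e-ISS of $f_0$ with constants $\beta,\gamma,\rho$). Assume the unknown dynamics has the form $f(x,c)=F(\phi(x;\Theta),c)$ for a known model $F(\phi(\cdot;\cdot),\cdot)$ and some true parameter $\Theta\in\mathcal{K}_1\subseteq\mathbb{R}^p$, with $c^{(i)}\in\mathcal{K}_2\subseteq\mathbb{R}^h$ for all $i$, where $\mathcal{K}_1,\mathcal{K}_2$ are convex sets, and assume each observed loss $\ell_t^{(i)}(\hat\Theta,\hat c)$ is differentiable and jointly convex in $(\hat\Theta,\hat c)$. Run OMAC in its convex instantiation (described in the context) with a meta-adapter $\mathcal{A}_1$ whose total regret is at most $T\cdot\varepsilon_1(N)$ and an inner-adapter $\mathcal{A}_2$ whose total regret is at most $N\cdot\varepsilon_2(T)$, where $\varepsilon_1(N)=o(N)$ and $\varepsilon_2(T)=o(T)$. Then $$\mathsf{ACE}:=\frac{1}{TN}\sum_{i=1}^N\sum_{t=1}^T\|x_t^{(i)}\| \le \frac{\gamma}{1-\rho}\sqrt{W^2+\frac{\varepsilon_2(T)}{T}+\frac{\varepsilon_1(N)}{N}}.$$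
   Context: Setting: states $x_t^{(i)}\in\mathbb{R}^n$, controls $u_t^{(i)}\in\mathbb{R}^m$, known $f_0:\mathbb{R}^n\to\mathbb{R}^n$, known $B:\mathbb{R}^n\to\mathbb{R}^{n\times m}$ with $\mathrm{rank}(B(x))=n$ for all $x$, unknown $f:\mathbb{R}^n\times\mathbb{R}^h\to\mathbb{R}^n$, unknown environment parameters $c^{(i)}$ (possibly chosen adversarially and adaptively), and disturbances $w_t^{(i)}$ (possibly adversarial) with $\|w_t^{(i)}\|\le W$. $f_0$ is exponentially input-to-state stable (e-ISS): there are $\beta,\gamma\ge0$, $0\le\rho<1$ such that for every $t$ and every $v_1,\dots,v_{t-1}\in\mathbb{R}^n$, the iterates $x_{k+1}=f_0(x_k)+v_k$ satisfy $\|x_t\|\le\beta\rho^{t-1}\|x_1\|+\gamma\sum_{k=1}^{t-1}\rho^{t-1-k}\|v_k\|$. Write $B_t^{(i)}=B(x_t^{(i)})$, $f_t^{(i)}=f(x_t^{(i)},c^{(i)})$. OMAC (convex instantiation): parameters $\hat\Theta^{(i)}\in\mathcal{K}_1$ (one per environment, $\hat\Theta^{(1)}\in\mathcal{K}_1$ initialized by $\mathcal{A}_1$) and $\hat c_t^{(i)}\in\mathcal{K}_2$ ($\hat c_1^{(i)}\in\mathcal{K}_2$ initialized by $\mathcal{A}_2$ in each environment). At step $(i,t)$ the controller computes $\hat f_t^{(i)}=F(\phi(x_t^{(i)};\hat\Theta^{(i)}),\hat c_t^{(i)})$, applies $u_t^{(i)}=B_t^{(i)\dagger}\hat f_t^{(i)}$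 ($\dagger$ = pseudo-inverse), observes $x_{t+1}^{(i)}$ and $y_t^{(i)}=f_0(x_t^{(i)})+B_t^{(i)}u_t^{(i)}-x_{t+1}^{(i)}=f_t^{(i)}-w_t^{(i)}$, and forms the loss $\ell_t^{(i)}(\hat\Theta,\hat c)=\|F(\phi(x_t^{(i)};\hat\Theta),\hat c)-y_t^{(i)}\|^2$. The inner cost is the linear function $g_t^{(i)}(\hat c)=\nabla_{\hat c}\ell_t^{(i)}(\hat\Theta^{(i)},\hat c_t^{(i)})\cdot\hat c$ and $\mathcal{A}_2$ produces $\hat c_{t+1}^{(i)}\in\mathcal{K}_2$ from $\hat c_t^{(i)}$ and $g_{1:t}^{(i)}$. At the end of environment $i$, the outer cost is $G^{(i)}(\hat\Theta)=\sum_{t=1}^T\nabla_{\hat\Theta}\ell_t^{(i)}(\hat\Theta^{(i)},\hat c_t^{(i)})\cdot\hat\Theta$ and $\mathcal{A}_1$ produces $\hat\Theta^{(i+1)}\in\mathcal{K}_1$ from $\hat\Theta^{(i)}$ and $G^{(1:i)}$. The parameters $c^{(i)}$ are never observed by the controller. Total regret of $\mathcal{A}_1$: $\sum_{i=1}^N G^{(i)}(\hat\Theta^{(i)})-\min_{\Theta'\in\mathcal{K}_1}\sum_{i=1}^N G^{(i)}(\Theta')$. Total regret of $\mathcal{A}_2$: $\sum_{i=1}^N\big[\sum_{t=1}^T g_t^{(i)}(\hat c_t^{(i)})-\min_{c'\in\mathcal{K}_2}\sum_{t=1}^T g_t^{(i)}(c')\big]$. *)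

theory Defs
  imports "HOL-Analysis.Analysis" "HOL-Library.Landau_Symbols"
begin

definition pinv :: "real^'m^'n \<Rightarrow> real^'n^'m" where
  "pinv A = (THE X. A ** X ** A = A \<and> X ** A ** X = X \<and>
                    transpose (A ** X) = A ** X \<and> transpose (X ** A) = X ** A)"

text \<open>Exponential input-to-state stability of f0 with constants beta, gamma, rho
  (iterates indexed from 1).\<close>
definition eISS :: "(real^'n \<Rightarrow> real^'n) \<Rightarrow> real \<Rightarrow> real \<Rightarrow> real \<Rightarrow> bool" where
  "eISS f0 \<beta> \<gamma> \<rho> \<longleftrightarrow> \<beta> \<ge> 0 \<and> \<gamma> \<ge> 0 \<and> 0 \<le> \<rho> \<and> \<rho> < 1 \<and>
     (\<forall>(xs :: nat \<Rightarrow> real^'n) (v :: nat \<Rightarrow> real^'n) t.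
        (\<forall>k\<ge>1. xs (Suc k) = f0 (xs k) + v k) \<longrightarrow> t \<ge> 1 \<longrightarrow>
        norm (xs t) \<le> \<beta> * \<rho> ^ (t - 1) * norm (xs 1)
                       + \<gamma> * (\<Sum>k = 1..t - 1. \<rho> ^ (t - 1 - k) * norm (v k)))"

definition omac_loss ::
  "('z \<Rightarrow> real^'h \<Rightarrow> real^'n) \<Rightarrow> (real^'n \<Rightarrow> real^'p \<Rightarrow> 'z) \<Rightarrow> real^'n \<Rightarrow> real^'n
    \<Rightarrow> (real^'p) \<times> (real^'h) \<Rightarrow> real" where
  "omac_loss F \<phi> x y = (\<lambda>(\<Theta>, c). (norm (F (\<phi> x \<Theta>) c - y))\<^sup>2)"

definition ACE :: "nat \<Rightarrow> nat \<Rightarrow> (nat \<Rightarrow> nat \<Rightarrow> real^'n) \<Rightarrow> real" where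
  "ACE N T x = (\<Sum>i = 1..N. \<Sum>t = 1..T. norm (x i t)) / (real T * real N)"

end

theory Submission
  imports Defs
begin



lemma pinv_right:
  fixes B :: "real^'m^'n"
  assumes r: "rank B = CARD('n)"
  shows "B ** pinv B = mat 1"
proof -
  have surj: "surj ((*v) B)" using r full_rank_surjective by blast
  define C where "C = B ** transpose B"
  have BT_inj: "transpose B *v v = 0 \<Longrightarrow> v = 0" for v
  proof -
    assume h: "transpose B *v v = 0"
    obtain a where a: "v = B *v a" using surj by (metis surj_def)
    have "inner v (B *v a) = inner (transpose B *v v) a"
      by (simp add: dot_lmul_matrix)
    then have "inner v v = 0" using h a by simp
    then show "v = 0" by simp
  qed
  have C_inj: "\<forall>v. C *v v = 0 \<longrightarrow> v = 0"
  proof (intro allI impI)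
    fix v assume h: "C *v v = 0"
    have "inner v (B *v (transpose B *v v)) = inner (transpose B *v v) (transpose B *v v)"
      by (simp add: dot_lmul_matrix)
    moreover have "B *v (transpose B *v v) = 0" using h by (metis C_def matrix_vector_mul_assoc)
    ultimately have "transpose B *v v = 0" by simp
    then show "v = 0" by (rule BT_inj)
  qed
  obtain M where M1: "M ** C = mat 1" using C_inj matrix_left_invertible_ker by blast
  have M2: "C ** M = mat 1" using M1 matrix_left_right_inverse by blast
  have Csym: "transpose C = C" by (simp add: C_def matrix_transpose_mul)
  have "transpose (M ** C) = mat 1" using M1 by (simp add: transpose_mat)
  then have MT1: "C ** transpose M = mat 1" using Csym by (simp add: matrix_transpose_mul)
  have Msym: "transpose M = M"
  proof -
    have "M = M ** (C ** transpose M)" using MT1 by simp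
    also have "\<dots> = (M ** C) ** transpose M" by (rule matrix_mul_assoc)
    also have "\<dots> = transpose M" using M1 by simp
    finally show ?thesis by simp
  qed
  define X where "X = transpose B ** M"
  have BX: "B ** X = mat 1"
  proof -
    have "B ** X = (B ** transpose B) ** M" unfolding X_def by (rule matrix_mul_assoc)
    then show ?thesis using M2 by (simp add: C_def)
  qed
  have right_of: "B ** Y = mat 1" if "B ** Y ** B = B" for Y :: "real^'n^'m"
  proof -
    have "(B ** Y) *v z = z" for z
    proof -
      obtain a where a: "z = B *v a" using surj by (metis surj_def)
      show ?thesis using that by (simp add: a matrix_vector_mul_assoc)
    qed
    then show ?thesis by (simp add: matrix_eq)
  qed
  let ?P = "\<lambda>X. B ** X ** B = B \<and> X ** B ** X = X \<and>
                    transpose (B ** X) = B ** X \<and> transpose (X ** B) = X ** B"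
  have PX1: "B ** X ** B = B" using BX by simp
  have PX2: "X ** B ** X = X" using BX by (simp add: matrix_mul_assoc[symmetric])
  have PX3: "transpose (B ** X) = B ** X" using BX by (simp add: transpose_mat)
  have PX4: "transpose (X ** B) = X ** B"
  proof -
    have "transpose (X ** B) = transpose B ** transpose X" by (rule matrix_transpose_mul)
    also have "transpose X = transpose M ** B" unfolding X_def by (simp add: matrix_transpose_mul)
    also have "transpose B ** (transpose M ** B) = X ** B" unfolding X_def Msym by (rule matrix_mul_assoc)
    finally show ?thesis .
  qed
  have PX: "?P X" using PX1 PX2 PX3 PX4 by blast
  have uniq: "Y = X" if PY: "?P Y" for Y
  proof -
    have BY: "B ** Y = mat 1" using PY right_of by blast
    have e1: "(X ** B) ** (Y ** B) = X ** B"
    proof -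
      have "(X ** B) ** (Y ** B) = X ** ((B ** Y) ** B)" by (simp add: matrix_mul_assoc)
      then show ?thesis using BY by simp
    qed
    have e2: "(Y ** B) ** (X ** B) = Y ** B"
    proof -
      have "(Y ** B) ** (X ** B) = Y ** ((B ** X) ** B)" by (simp add: matrix_mul_assoc)
      then show ?thesis using BX by simp
    qed
    have "transpose ((X ** B) ** (Y ** B)) = transpose (Y ** B) ** transpose (X ** B)"
      by (rule matrix_transpose_mul)
    also have "\<dots> = (Y ** B) ** (X ** B)" using PX PY by simp
    finally have "X ** B = Y ** B" using e1 e2 PX4 by simp
    have "Y = (Y ** B) ** Y" using BY by (simp add: matrix_mul_assoc[symmetric])
    also have "\<dots> = (X ** B) ** Y" using \<open>X ** B = Y ** B\<close> by simp
    also have "\<dots> = X" using BY by (simp add: matrix_mul_assoc[symmetric])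
    finally show "Y = X" .
  qed
  have "?P (pinv B)" unfolding pinv_def
    by (rule theI[of ?P X, OF PX uniq])
  then show ?thesis using right_of by blast
qed


lemma convex_grad:
  fixes L :: "'a::real_normed_vector \<Rightarrow> real"
  assumes cv: "convex_on UNIV L" and d: "L differentiable (at p)"
  shows "L p + frechet_derivative L (at p) (q - p) \<le> L q"
proof -
  define D where "D = frechet_derivative L (at p)"
  have hd: "(L has_derivative D) (at p)" using d D_def frechet_derivative_works by blast
  define g where "g = (\<lambda>s::real. L (p + s *\<^sub>R (q - p)))"
  have lin: "((\<lambda>s::real. p + s *\<^sub>R (q - p)) has_derivative (\<lambda>s. s *\<^sub>R (q - p))) (at 0)"
    by (auto intro!: derivative_eq_intros)
  have "(g has_derivative (\<lambda>s. D (s *\<^sub>R (q - p)))) (at 0)"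
    unfolding g_def using has_derivative_compose[OF lin, of L D] hd by (simp add: o_def)
  moreover have "D (s *\<^sub>R (q - p)) = s * D (q - p)" for s
    using has_derivative_linear[OF hd] by (simp add: linear_scale)
  ultimately have "(g has_derivative (\<lambda>s. s * D (q - p))) (at 0)" by simp
  moreover have "(\<lambda>s. s * D (q - p)) = (*) (D (q - p))" by (auto simp: fun_eq_iff)
  ultimately have gd: "(g has_field_derivative D (q - p)) (at 0)"
    by (simp add: has_field_derivative_def)
  have gc: "convex_on UNIV g"
  proof (rule convex_onI)
    fix t a b :: real assume t: "0 < t" "t < 1"
    have "p + ((1 - t) * a + t * b) *\<^sub>R (q - p) = (1 - t) *\<^sub>R (p + a *\<^sub>R (q - p)) + t *\<^sub>R (p + b *\<^sub>R (q - p))"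
      by (simp add: algebra_simps)
    then have "g ((1 - t) * a + t * b) = L ((1 - t) *\<^sub>R (p + a *\<^sub>R (q - p)) + t *\<^sub>R (p + b *\<^sub>R (q - p)))"
      by (simp add: g_def)
    also have "\<dots> \<le> (1 - t) * L (p + a *\<^sub>R (q - p)) + t * L (p + b *\<^sub>R (q - p))"
      using cv t by (intro convex_onD) auto
    finally show "g ((1 - t) *\<^sub>R a + t *\<^sub>R b) \<le> (1 - t) * g a + t * g b" by (simp add: g_def)
  qed simp
  have "D (q - p) * (1 - 0) \<le> g 1 - g 0"
    by (rule convex_on_imp_above_tangent[OF gc]) (use gd in \<open>auto simp: has_field_derivative_at_within\<close>)
  then show ?thesis by (simp add: g_def D_def)
qed

lemma geom_h:
  fixes \<rho> :: real assumes "0 \<le> \<rho>" "\<rho> < 1"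
  shows "(\<Sum>t = 1..T. if k < t then \<rho> ^ (t - 1 - k) else 0) = (if k < T then (1 - \<rho> ^ (T - k)) / (1 - \<rho>) else 0)"
proof (induction T)
  case 0 then show ?case by simp
next
  case (Suc T)
  have "(\<Sum>t = 1..Suc T. if k < t then \<rho> ^ (t - 1 - k) else 0)
       = (\<Sum>t = 1..T. if k < t then \<rho> ^ (t - 1 - k) else 0) + (if k < Suc T then \<rho> ^ (T - k) else 0)"
    by simp
  also have "\<dots> = (if k < Suc T then (1 - \<rho> ^ (Suc T - k)) / (1 - \<rho>) else 0)"
  proof -
    consider "k < T" | "k = T" | "k > T" by linarith
    then show ?thesis
    proof cases
      case 1
      then have e: "Suc T - k = Suc (T - k)" by simp
      have "(\<Sum>t = 1..T. if k < t then \<rho> ^ (t - 1 - k) else 0) + (if k < Suc T then \<rho> ^ (T - k) else 0)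
          = (1 - \<rho> ^ (T - k)) / (1 - \<rho>) + \<rho> ^ (T - k)" using 1 Suc.IH by simp
      also have "\<dots> = (1 - \<rho> ^ Suc (T - k)) / (1 - \<rho>)" using assms by (simp add: field_simps)
      finally show ?thesis using 1 e by simp
    next
      case 2 then show ?thesis using assms Suc.IH by simp
    next
      case 3 then show ?thesis using Suc.IH by simp
    qed
  qed
  finally show ?case .
qed

lemma geom_h_le:
  fixes \<rho> :: real assumes "0 \<le> \<rho>" "\<rho> < 1"
  shows "(\<Sum>t = 1..T. if k < t then \<rho> ^ (t - 1 - k) else 0) \<le> 1 / (1 - \<rho>)"
proof -
  have "1 - \<rho> ^ (T - k) \<le> 1" using assms by simp
  then have "(1 - \<rho> ^ (T - k)) / (1 - \<rho>) \<le> 1 / (1 - \<rho>)" using assms by (intro divide_right_mono) auto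
  then show ?thesis unfolding geom_h[OF assms] using assms by simp
qed

lemma double_geom:
  fixes \<rho> :: real and a :: "nat \<Rightarrow> real"
  assumes "0 \<le> \<rho>" "\<rho> < 1" and a: "\<And>k. a k \<ge> 0"
  shows "(\<Sum>t = 1..T. \<Sum>k = 1..t - 1. \<rho> ^ (t - 1 - k) * a k) \<le> (\<Sum>k = 1..T. a k) / (1 - \<rho>)"
proof -
  have "(\<Sum>k = 1..t - 1. \<rho> ^ (t - 1 - k) * a k) = (\<Sum>k = 1..T. if k < t then \<rho> ^ (t - 1 - k) * a k else 0)"
    if "t \<in> {1..T}" for t
  proof -
    have "(\<Sum>k = 1..T. if k < t then \<rho> ^ (t - 1 - k) * a k else 0) = (\<Sum>k \<in> {k\<in>{1..T}. k < t}. \<rho> ^ (t - 1 - k) * a k)"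
      using sum.inter_filter[of "{1..T}" "\<lambda>k. \<rho> ^ (t - 1 - k) * a k" "\<lambda>k. k < t"] by simp
    also have "{k\<in>{1..T}. k < t} = {1..t - 1}" using that by auto
    finally show ?thesis by simp
  qed
  then have "(\<Sum>t = 1..T. \<Sum>k = 1..t - 1. \<rho> ^ (t - 1 - k) * a k)
      = (\<Sum>t = 1..T. \<Sum>k = 1..T. if k < t then \<rho> ^ (t - 1 - k) * a k else 0)"
    by (rule sum.cong[OF refl])
  also have "\<dots> = (\<Sum>k = 1..T. \<Sum>t = 1..T. if k < t then \<rho> ^ (t - 1 - k) * a k else 0)"
    by (rule sum.swap)
  also have "\<dots> = (\<Sum>k = 1..T. a k * (\<Sum>t = 1..T. if k < t then \<rho> ^ (t - 1 - k) else 0))"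
    by (simp add: sum_distrib_left if_distrib mult.commute cong: if_cong)
  also have "\<dots> \<le> (\<Sum>k = 1..T. a k * (1 / (1 - \<rho>)))"
    by (rule sum_mono, rule mult_left_mono[OF geom_h_le]) (use assms in auto)
  also have "\<dots> = (\<Sum>k = 1..T. a k) / (1 - \<rho>)"
    by (simp add: sum_divide_distrib)
  finally show ?thesis .
qed
theorem theorem3:
  fixes f0 :: "real^'n \<Rightarrow> real^'n"
    and B :: "real^'n \<Rightarrow> real^'m^'n"
    and F :: "'z \<Rightarrow> real^'h \<Rightarrow> real^'n"
    and \<phi> :: "real^'n \<Rightarrow> real^'p \<Rightarrow> 'z"
    and f :: "real^'n \<Rightarrow> real^'h \<Rightarrow> real^'n"
    and \<Theta> :: "real^'p"
    and K1 :: "(real^'p) set" and K2 :: "(real^'h) set"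
    and c :: "nat \<Rightarrow> real^'h"
    and x w y :: "nat \<Rightarrow> nat \<Rightarrow> real^'n"
    and u :: "nat \<Rightarrow> nat \<Rightarrow> real^'m"
    and \<Theta>hat :: "nat \<Rightarrow> real^'p"
    and chat :: "nat \<Rightarrow> nat \<Rightarrow> real^'h"
    and \<epsilon>1 \<epsilon>2 :: "nat \<Rightarrow> real"
    and N T :: nat and W \<beta> \<gamma> \<rho> :: real
  assumes NT: "N \<ge> 1" "T \<ge> 1"
    and rankB: "\<And>z. rank (B z) = CARD('n)"
    and iss: "eISS f0 \<beta> \<gamma> \<rho>"
    and cvx: "convex K1" "convex K2"
    and model: "\<And>z cc. f z cc = F (\<phi> z \<Theta>) cc"
    and Theta_in: "\<Theta> \<in> K1"
    and c_in: "\<And>i. i \<in> {1..N} \<Longrightarrow> c i \<in> K2"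
    and w_bd: "\<And>i t. i \<in> {1..N} \<Longrightarrow> t \<in> {1..T} \<Longrightarrow> norm (w i t) \<le> W"
    and x_init: "\<And>i. i \<in> {1..N} \<Longrightarrow> x i 1 = 0"
    and dyn: "\<And>i t. i \<in> {1..N} \<Longrightarrow> t \<in> {1..T} \<Longrightarrow>
               x i (Suc t) = f0 (x i t) + B (x i t) *v u i t - f (x i t) (c i) + w i t"
    and ctrl: "\<And>i t. i \<in> {1..N} \<Longrightarrow> t \<in> {1..T} \<Longrightarrow>
               u i t = pinv (B (x i t)) *v F (\<phi> (x i t) (\<Theta>hat i)) (chat i t)"
    and obs: "\<And>i t. i \<in> {1..N} \<Longrightarrow> t \<in> {1..T} \<Longrightarrow>
               y i t = f0 (x i t) + B (x i t) *v u i t - x i (Suc t)"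
    and Thetahat_in: "\<And>i. i \<in> {1..N} \<Longrightarrow> \<Theta>hat i \<in> K1"
    and chat_in: "\<And>i t. i \<in> {1..N} \<Longrightarrow> t \<in> {1..T} \<Longrightarrow> chat i t \<in> K2"
    and loss_diff: "\<And>i t z. i \<in> {1..N} \<Longrightarrow> t \<in> {1..T} \<Longrightarrow>
               omac_loss F \<phi> (x i t) (y i t) differentiable (at z)"
    and loss_convex: "\<And>i t. i \<in> {1..N} \<Longrightarrow> t \<in> {1..T} \<Longrightarrow>
               convex_on UNIV (omac_loss F \<phi> (x i t) (y i t))"
    and regret1: "\<forall>\<Theta>'\<in>K1.
         (\<Sum>i = 1..N. \<Sum>t = 1..T.
            frechet_derivative (omac_loss F \<phi> (x i t) (y i t)) (at (\<Theta>hat i, chat i t)) (\<Theta>hat i, 0))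
       - (\<Sum>i = 1..N. \<Sum>t = 1..T.
            frechet_derivative (omac_loss F \<phi> (x i t) (y i t)) (at (\<Theta>hat i, chat i t)) (\<Theta>', 0))
       \<le> real T * \<epsilon>1 N"
    and regret2: "\<forall>c' :: nat \<Rightarrow> real^'h. (\<forall>i\<in>{1..N}. c' i \<in> K2) \<longrightarrow>
         (\<Sum>i = 1..N. (\<Sum>t = 1..T.
            frechet_derivative (omac_loss F \<phi> (x i t) (y i t)) (at (\<Theta>hat i, chat i t)) (0, chat i t))
          - (\<Sum>t = 1..T.
            frechet_derivative (omac_loss F \<phi> (x i t) (y i t)) (at (\<Theta>hat i, chat i t)) (0, c' i)))
       \<le> real N * \<epsilon>2 T"
    and eps1_o: "\<epsilon>1 \<in> o(\<lambda>n. real n)"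
    and eps2_o: "\<epsilon>2 \<in> o(\<lambda>n. real n)"
  shows "ACE N T x \<le> \<gamma> / (1 - \<rho>) * sqrt (W\<^sup>2 + \<epsilon>2 T / real T + \<epsilon>1 N / real N)"
  proof -
  define L where "L i t = omac_loss F \<phi> (x i t) (y i t)" for i t
  define D where "D i t = frechet_derivative (L i t) (at (\<Theta>hat i, chat i t))" for i t
  define v where "v i t = x i (Suc t) - f0 (x i t)" for i t
  define Q where "Q = W\<^sup>2 + \<epsilon>2 T / real T + \<epsilon>1 N / real N"
  have iss': "\<beta> \<ge> 0" "\<gamma> \<ge> 0" "0 \<le> \<rho>" "\<rho> < 1" using iss by (auto simp: eISS_def)
  have W0: "W \<ge> 0" using w_bd[of 1 1] NT by (meson atLeastAtMost_iff le_refl norm_ge_zero order_trans)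
  have Bu: "B (x i t) *v u i t = F (\<phi> (x i t) (\<Theta>hat i)) (chat i t)"
    if i: "i \<in> {1..N}" and t: "t \<in> {1..T}" for i t
    using ctrl[OF i t] pinv_right[OF rankB] by (simp add: matrix_vector_mul_assoc)
  have vy: "v i t = F (\<phi> (x i t) (\<Theta>hat i)) (chat i t) - y i t"
    if i: "i \<in> {1..N}" and t: "t \<in> {1..T}" for i t
    using obs[OF i t] Bu[OF i t] by (simp add: v_def algebra_simps)
  have Lp: "L i t (\<Theta>hat i, chat i t) = (norm (v i t))\<^sup>2"
    if i: "i \<in> {1..N}" and t: "t \<in> {1..T}" for i t
    using vy[OF i t] by (simp add: L_def omac_loss_def)
  have Lq: "L i t (\<Theta>, c i) = (norm (w i t))\<^sup>2"
    if i: "i \<in> {1..N}" and t: "t \<in> {1..T}" for i t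
  proof -
    have "y i t = f (x i t) (c i) - w i t" using obs[OF i t] dyn[OF i t] by (simp add: algebra_simps)
    then show ?thesis by (simp add: L_def omac_loss_def model)
  qed
  have grad: "(norm (v i t))\<^sup>2 \<le> W\<^sup>2 + (D i t (\<Theta>hat i, 0) - D i t (\<Theta>, 0)) + (D i t (0, chat i t) - D i t (0, c i))"
    if i: "i \<in> {1..N}" and t: "t \<in> {1..T}" for i t
  proof -
    have lin: "linear (D i t)" unfolding D_def L_def using loss_diff[OF i t] by (rule linear_frechet_derivative)
    have cg: "L i t (\<Theta>hat i, chat i t) + D i t ((\<Theta>, c i) - (\<Theta>hat i, chat i t)) \<le> L i t (\<Theta>, c i)"
      unfolding D_def L_def by (rule convex_grad[OF loss_convex[OF i t] loss_diff[OF i t]])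
    have eq: "(\<Theta>, c i) - (\<Theta>hat i, chat i t) = ((\<Theta>, 0) - (\<Theta>hat i, 0)) + ((0, c i) - (0, chat i t))"
      by simp
    have "D i t ((\<Theta>, c i) - (\<Theta>hat i, chat i t)) = D i t ((\<Theta>, 0) - (\<Theta>hat i, 0)) + D i t ((0, c i) - (0, chat i t))"
      unfolding eq by (rule linear_add[OF lin])
    also have "\<dots> = (D i t (\<Theta>, 0) - D i t (\<Theta>hat i, 0)) + (D i t (0, c i) - D i t (0, chat i t))"
      by (simp only: linear_diff[OF lin])
    finally have dd: "D i t ((\<Theta>, c i) - (\<Theta>hat i, chat i t)) = (D i t (\<Theta>, 0) - D i t (\<Theta>hat i, 0)) + (D i t (0, c i) - D i t (0, chat i t))" .
    have wW: "(norm (w i t))\<^sup>2 \<le> W\<^sup>2" using w_bd[OF i t] by (simp add: power_mono)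
    show ?thesis using cg dd wW Lp[OF i t] Lq[OF i t] by linarith
  qed
  define V1 where "V1 = (\<Sum>i = 1..N. \<Sum>k = 1..T. norm (v i k))"
  define V2 where "V2 = (\<Sum>i = 1..N. \<Sum>k = 1..T. (norm (v i k))\<^sup>2)"
  have r1: "(\<Sum>i = 1..N. \<Sum>t = 1..T. D i t (\<Theta>hat i, 0)) - (\<Sum>i = 1..N. \<Sum>t = 1..T. D i t (\<Theta>, 0)) \<le> real T * \<epsilon>1 N"
    using regret1 Theta_in unfolding D_def L_def by blast
  have r2: "(\<Sum>i = 1..N. (\<Sum>t = 1..T. D i t (0, chat i t)) - (\<Sum>t = 1..T. D i t (0, c i))) \<le> real N * \<epsilon>2 T"
    using regret2 c_in unfolding D_def L_def by blast
  have "V2 \<le> (\<Sum>i = 1..N. \<Sum>t = 1..T. W\<^sup>2 + (D i t (\<Theta>hat i, 0) - D i t (\<Theta>, 0)) + (D i t (0, chat i t) - D i t (0, c i)))"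
    unfolding V2_def by (intro sum_mono grad) auto
  also have "\<dots> = real N * real T * W\<^sup>2 + ((\<Sum>i = 1..N. \<Sum>t = 1..T. D i t (\<Theta>hat i, 0)) - (\<Sum>i = 1..N. \<Sum>t = 1..T. D i t (\<Theta>, 0)))
       + (\<Sum>i = 1..N. (\<Sum>t = 1..T. D i t (0, chat i t)) - (\<Sum>t = 1..T. D i t (0, c i)))"
    by (simp add: sum.distrib sum_subtractf)
  also have "\<dots> \<le> real N * real T * W\<^sup>2 + real T * \<epsilon>1 N + real N * \<epsilon>2 T"
    using r1 r2 by linarith
  also have "\<dots> = (real T * real N) * Q"
    using NT by (simp add: Q_def field_simps)
  finally have V2le: "V2 \<le> (real T * real N) * Q" .
  have V2ge: "V2 \<ge> 0" unfolding V2_def by (intro sum_nonneg) auto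
  have TN: "real T * real N > 0" using NT by simp
  have Q0: "Q \<ge> 0"
  proof (rule ccontr)
    assume "\<not> Q \<ge> 0"
    then have "(real T * real N) * Q < 0" using TN by (simp add: mult_pos_neg)
    then show False using V2le V2ge by linarith
  qed
  have "V1\<^sup>2 \<le> V2 * (real T * real N)"
  proof -
    have "V1 = (\<Sum>(i,k)\<in>{1..N} \<times> {1..T}. norm (v i k))" unfolding V1_def by (rule sum.cartesian_product)
    moreover have "V2 = (\<Sum>(i,k)\<in>{1..N} \<times> {1..T}. (norm (v i k))\<^sup>2)" unfolding V2_def by (rule sum.cartesian_product)
    moreover have "card ({1..N} \<times> {1..T}) = N * T" by (simp add: card_cartesian_product)
    moreover have "(\<Sum>(i,k)\<in>{1..N} \<times> {1..T}. norm (v i k))\<^sup>2 \<le> (\<Sum>z\<in>{1..N} \<times> {1..T}. ((\<lambda>(i,k). norm (v i k)) z)\<^sup>2) * card ({1..N} \<times> {1..T})"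
      by (rule sum_squared_le_sum_of_squares)
    ultimately show ?thesis by (simp add: case_prod_unfold mult.commute)
  qed
  then have "V1 \<le> sqrt (V2 * (real T * real N))" by (rule real_le_rsqrt)
  also have "\<dots> \<le> sqrt ((real T * real N)\<^sup>2 * Q)"
  proof (intro real_sqrt_le_mono)
    have "V2 * (real T * real N) \<le> ((real T * real N) * Q) * (real T * real N)"
      by (rule mult_right_mono[OF V2le]) (use TN in simp)
    also have "\<dots> = (real T * real N)\<^sup>2 * Q" by (simp add: power2_eq_square mult_ac)
    finally show "V2 * (real T * real N) \<le> (real T * real N)\<^sup>2 * Q" .
  qed
  also have "\<dots> = (real T * real N) * sqrt Q" using TN by (simp add: real_sqrt_mult)
  finally have V1le: "V1 \<le> (real T * real N) * sqrt Q" .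
  have xb: "norm (x i t) \<le> \<gamma> * (\<Sum>k = 1..t - 1. \<rho> ^ (t - 1 - k) * norm (v i k))"
    if i: "i \<in> {1..N}" and t: "t \<in> {1..T}" for i t
  proof -
    have h: "\<forall>k\<ge>1. x i (Suc k) = f0 (x i k) + v i k" by (simp add: v_def)
    have "norm (x i t) \<le> \<beta> * \<rho> ^ (t - 1) * norm (x i 1) + \<gamma> * (\<Sum>k = 1..t - 1. \<rho> ^ (t - 1 - k) * norm (v i k))"
      using iss h t unfolding eISS_def by auto
    then show ?thesis using x_init[OF i] by simp
  qed
  have xsum: "(\<Sum>t = 1..T. norm (x i t)) \<le> \<gamma> / (1 - \<rho>) * (\<Sum>k = 1..T. norm (v i k))"
    if i: "i \<in> {1..N}" for i
  proof -
    have "(\<Sum>t = 1..T. norm (x i t)) \<le> (\<Sum>t = 1..T. \<gamma> * (\<Sum>k = 1..t - 1. \<rho> ^ (t - 1 - k) * norm (v i k)))"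
      by (intro sum_mono xb[OF i]) auto
    also have "\<dots> = \<gamma> * (\<Sum>t = 1..T. \<Sum>k = 1..t - 1. \<rho> ^ (t - 1 - k) * norm (v i k))"
      by (simp add: sum_distrib_left)
    also have "\<dots> \<le> \<gamma> * ((\<Sum>k = 1..T. norm (v i k)) / (1 - \<rho>))"
      by (intro mult_left_mono double_geom iss') auto
    finally show ?thesis by simp
  qed
  have "(\<Sum>i = 1..N. \<Sum>t = 1..T. norm (x i t)) \<le> (\<Sum>i = 1..N. \<gamma> / (1 - \<rho>) * (\<Sum>k = 1..T. norm (v i k)))"
    by (intro sum_mono xsum) auto
  also have "\<dots> = \<gamma> / (1 - \<rho>) * V1" by (simp add: V1_def sum_distrib_left)
  also have "\<dots> \<le> \<gamma> / (1 - \<rho>) * ((real T * real N) * sqrt Q)"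
    using V1le iss' by (intro mult_left_mono) auto
  finally have "(\<Sum>i = 1..N. \<Sum>t = 1..T. norm (x i t)) / (real T * real N) \<le> \<gamma> / (1 - \<rho>) * sqrt Q"
    using TN by (simp add: divide_le_eq mult_ac)
  then show ?thesis by (simp add: ACE_def Q_def)
qed

end
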